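(* For any group $H$, the set $\mathcal I_H=\{G\in\mathcal G:\ \overline G\cong H\}$ is either meager or comeager in $\mathcal G$.
   Context: Let $\mathbb N=\{1,2,3,\dots\}$. Equip $\mathbb N^{\mathbb N\times\mathbb N}$ with the product topology of the discrete topology on $\mathbb N$. Let $\mathcal G$ be the subspace consisting of those $A\in\mathbb N^{\mathbb N\times\mathbb N}$ that are the multiplication table of a group on the underlying set $\mathbb N$ whose identity element is $1$. For $G\in\mathcal G$, $\overline G$ denotes the group on $\mathbb N$ with multiplication table $G$. *)

theory Defs
  imports "HOL-Analysis.Analysis" "HOL-Algebra.Group"
begin

definition Npos :: "nat set" where
  "Npos = {n. 1 \<le> n}"

text \<open>N^(N x N) with the product of the discrete topologies on N.
  Points are extensional functions (undefined outside N x N).\<close>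
definition table_space :: "(nat \<times> nat \<Rightarrow> nat) topology" where
  "table_space = product_topology (\<lambda>_. discrete_topology Npos) (Npos \<times> Npos)"

definition group_of_table :: "(nat \<times> nat \<Rightarrow> nat) \<Rightarrow> nat monoid" where
  "group_of_table A = \<lparr>carrier = Npos, mult = (\<lambda>x y. A (x, y)), one = 1\<rparr>"

definition GG :: "(nat \<times> nat \<Rightarrow> nat) set" where
  "GG = {A \<in> topspace table_space. group (group_of_table A)}"

definition GG_space :: "(nat \<times> nat \<Rightarrow> nat) topology" where
  "GG_space = subtopology table_space GG"

definition nowhere_dense_in :: "'a topology \<Rightarrow> 'a set \<Rightarrow> bool" where
  "nowhere_dense_in X N \<longleftrightarrow> N \<subseteq> topspace X \<and> X interior_of (X closure_of N) = {}"

definition meager_in :: "'a topology \<Rightarrow> 'a set \<Rightarrow> bool" where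
  "meager_in X S \<longleftrightarrow> S \<subseteq> topspace X \<and>
     (\<exists>F. countable F \<and> (\<forall>N\<in>F. nowhere_dense_in X N) \<and> S \<subseteq> \<Union>F)"

definition comeager_in :: "'a topology \<Rightarrow> 'a set \<Rightarrow> bool" where
  "comeager_in X S \<longleftrightarrow> S \<subseteq> topspace X \<and> meager_in X (topspace X - S)"

end

theory Submission
  imports Defs
begin

lemma topspace_table: "topspace table_space = (\<Pi>\<^sub>E ij\<in>Npos\<times>Npos. Npos)"
  by (simp add: table_space_def)

lemma GG_top: "A \<in> GG \<Longrightarrow> A \<in> topspace table_space"
  by (simp add: GG_def)

lemma top_ext: "A \<in> topspace table_space \<Longrightarrow> (i,j) \<notin> Npos \<times> Npos \<Longrightarrow> A (i,j) = undefined"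
  by (auto simp: topspace_table PiE_def extensional_def)

lemma top_clo: "A \<in> topspace table_space \<Longrightarrow> a \<in> Npos \<Longrightarrow> b \<in> Npos \<Longrightarrow> A (a,b) \<in> Npos"
  by (auto simp: topspace_table PiE_def)

lemma one_Npos[simp]: "1 \<in> Npos" by (simp add: Npos_def)
lemma zero_Npos[simp]: "0 \<notin> Npos" by (simp add: Npos_def)
lemma Npos_iff: "n \<in> Npos \<longleftrightarrow> n \<noteq> 0" by (auto simp: Npos_def)

lemma table_groupI:
  assumes clo: "\<And>a b. a \<in> Npos \<Longrightarrow> b \<in> Npos \<Longrightarrow> A (a,b) \<in> Npos"
    and ass: "\<And>a b c. a \<in> Npos \<Longrightarrow> b \<in> Npos \<Longrightarrow> c \<in> Npos \<Longrightarrow> A (A (a,b), c) = A (a, A (b,c))"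
    and lone: "\<And>a. a \<in> Npos \<Longrightarrow> A (1,a) = a"
    and linv: "\<And>a. a \<in> Npos \<Longrightarrow> \<exists>b\<in>Npos. A (b,a) = 1"
  shows "group (group_of_table A)"
  by (rule groupI) (simp_all add: group_of_table_def clo ass lone linv del: One_nat_def)


lemma GG_group: "A \<in> GG \<Longrightarrow> group (group_of_table A)"
  by (simp add: GG_def)

lemma GG_clo: "A \<in> GG \<Longrightarrow> a \<in> Npos \<Longrightarrow> b \<in> Npos \<Longrightarrow> A (a,b) \<in> Npos"
  by (simp add: GG_def top_clo)

lemma GG_ass: "A \<in> GG \<Longrightarrow> a \<in> Npos \<Longrightarrow> b \<in> Npos \<Longrightarrow> c \<in> Npos \<Longrightarrow> A (A (a,b), c) = A (a, A (b,c))"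
  using group.is_monoid[OF GG_group] monoid.m_assoc[of "group_of_table A" a b c]
  by (auto simp: group_of_table_def)

lemma GG_lone: "A \<in> GG \<Longrightarrow> a \<in> Npos \<Longrightarrow> A (1,a) = a"
  using group.is_monoid[OF GG_group] monoid.l_one[of "group_of_table A" a]
  by (auto simp: group_of_table_def)

lemma GG_rone: "A \<in> GG \<Longrightarrow> a \<in> Npos \<Longrightarrow> A (a,1) = a"
  using group.is_monoid[OF GG_group] monoid.r_one[of "group_of_table A" a]
  by (auto simp: group_of_table_def)

lemma GG_linv: "A \<in> GG \<Longrightarrow> a \<in> Npos \<Longrightarrow> \<exists>b\<in>Npos. A (b,a) = 1"
  using GG_group[of A] group.l_inv_ex[of "group_of_table A" a]
  by (auto simp: group_of_table_def)


abbreviation ginv :: "(nat \<Rightarrow> nat) \<Rightarrow> nat \<Rightarrow> nat" where "ginv f \<equiv> inv_into UNIV f"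

definition Sperm :: "(nat \<Rightarrow> nat) set" where
  "Sperm = {g. bij g \<and> g 0 = 0 \<and> g 1 = 1}"

definition act :: "(nat \<Rightarrow> nat) \<Rightarrow> (nat \<times> nat \<Rightarrow> nat) \<Rightarrow> (nat \<times> nat \<Rightarrow> nat)" where
  "act g A = (\<lambda>(i,j). if i \<in> Npos \<and> j \<in> Npos then g (A (ginv g i, ginv g j)) else undefined)"

lemma Sperm_bij: "g \<in> Sperm \<Longrightarrow> bij g" by (simp add: Sperm_def)
lemma Sperm_0: "g \<in> Sperm \<Longrightarrow> g 0 = 0" by (simp add: Sperm_def)
lemma Sperm_1: "g \<in> Sperm \<Longrightarrow> g 1 = 1" by (simp add: Sperm_def)

lemma Sperm_inv_f[simp]: "g \<in> Sperm \<Longrightarrow> ginv g (g a) = a"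
  by (meson Sperm_bij bij_def inv_f_f)
lemma Sperm_f_inv[simp]: "g \<in> Sperm \<Longrightarrow> g (ginv g a) = a"
  by (meson Sperm_bij bij_def surj_f_inv_f)
lemma Sperm_eq[simp]: "g \<in> Sperm \<Longrightarrow> g a = g b \<longleftrightarrow> a = b"
  by (metis Sperm_inv_f)

lemma Sperm_Npos[simp]: "g \<in> Sperm \<Longrightarrow> g n \<in> Npos \<longleftrightarrow> n \<in> Npos"
  by (metis Npos_iff Sperm_0 Sperm_eq)

lemma Sperm_inv: "g \<in> Sperm \<Longrightarrow> ginv g \<in> Sperm"
  unfolding Sperm_def
  by (metis (mono_tags, lifting) bij_imp_bij_inv bij_is_inj inv_f_f mem_Collect_eq)

lemma Sperm_comp: "g \<in> Sperm \<Longrightarrow> h \<in> Sperm \<Longrightarrow> g \<circ> h \<in> Sperm"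
  unfolding Sperm_def by (auto intro: bij_comp)

lemma Sperm_id: "id \<in> Sperm" by (simp add: Sperm_def)

lemma inv_comp_Sperm: "g \<in> Sperm \<Longrightarrow> h \<in> Sperm \<Longrightarrow> ginv (g \<circ> h) = ginv h \<circ> ginv g"
  by (simp add: Sperm_bij o_inv_distrib)

lemma Sperm_inv_Npos[simp]: "g \<in> Sperm \<Longrightarrow> ginv g n \<in> Npos \<longleftrightarrow> n \<in> Npos"
  by (metis Sperm_Npos Sperm_inv)

lemma act_top: "A \<in> topspace table_space \<Longrightarrow> g \<in> Sperm \<Longrightarrow> act g A \<in> topspace table_space"
  unfolding topspace_table act_def by (auto simp: PiE_def extensional_def top_clo)

lemma act_app: "g \<in> Sperm \<Longrightarrow> a \<in> Npos \<Longrightarrow> b \<in> Npos \<Longrightarrow> act g A (g a, g b) = g (A (a,b))"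
  by (simp add: act_def)

lemma act_app': "g \<in> Sperm \<Longrightarrow> i \<in> Npos \<Longrightarrow> j \<in> Npos \<Longrightarrow> act g A (i,j) = g (A (ginv g i, ginv g j))"
  by (simp add: act_def)

lemma act_out: "(i,j) \<notin> Npos \<times> Npos \<Longrightarrow> act g A (i,j) = undefined"
  by (auto simp: act_def)

lemma act_comp: "g \<in> Sperm \<Longrightarrow> h \<in> Sperm \<Longrightarrow> act g (act h A) = act (g \<circ> h) A"
  by (rule ext) (auto simp: act_def inv_comp_Sperm)

lemma table_eqI: "A \<in> topspace table_space \<Longrightarrow> B \<in> topspace table_space \<Longrightarrow>
   (\<And>i j. i \<in> Npos \<Longrightarrow> j \<in> Npos \<Longrightarrow> A (i,j) = B (i,j)) \<Longrightarrow> A = B"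
  apply (rule ext)
  subgoal for ij by (cases ij) (metis mem_Sigma_iff top_ext)
  done

lemma act_id: "A \<in> topspace table_space \<Longrightarrow> act id A = A"
  by (rule table_eqI[OF act_top[OF _ Sperm_id]]) (auto simp: act_def inv_id)

lemma act_inv_act: "A \<in> topspace table_space \<Longrightarrow> g \<in> Sperm \<Longrightarrow> act (ginv g) (act g A) = A"
  by (metis Sperm_bij Sperm_inv act_comp act_id bij_betw_def inv_o_cancel)

lemma act_act_inv: "A \<in> topspace table_space \<Longrightarrow> g \<in> Sperm \<Longrightarrow> act g (act (ginv g) A) = A"
  by (metis Sperm_bij Sperm_inv act_comp act_id bij_is_surj surj_iff)

lemma Sperm_surjE: "g \<in> Sperm \<Longrightarrow> i \<in> Npos \<Longrightarrow> (\<And>a. a \<in> Npos \<Longrightarrow> i = g a \<Longrightarrow> P) \<Longrightarrow> P"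
  by (metis Sperm_f_inv Sperm_inv_Npos)


lemma act_GG: assumes "A \<in> GG" "g \<in> Sperm" shows "act g A \<in> GG"
proof -
  let ?B = "act g A"
  have top: "?B \<in> topspace table_space" using assms act_top GG_top by blast
  have "group (group_of_table ?B)"
  proof (rule table_groupI)
    show "?B (a,b) \<in> Npos" if "a \<in> Npos" "b \<in> Npos" for a b using top that top_clo by blast
    show "?B (?B (a,b), c) = ?B (a, ?B (b,c))" if "a \<in> Npos" "b \<in> Npos" "c \<in> Npos" for a b c
    proof -
      define a' b' c' where "a' = ginv g a" "b' = ginv g b" "c' = ginv g c"
      then have "a' \<in> Npos" "b' \<in> Npos" "c' \<in> Npos" "a = g a'" "b = g b'" "c = g c'"
        using that assms by auto
      then show ?thesis using assms by (simp add: act_app GG_clo GG_ass)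
    qed
    show "?B (1,a) = a" if "a \<in> Npos" for a
    proof -
      define a' where "a' = ginv g a"
      then have "a' \<in> Npos" "a = g a'" using that assms by auto
      then show ?thesis using assms by (metis GG_lone Sperm_1 act_app one_Npos)
    qed
    show "\<exists>b\<in>Npos. ?B (b,a) = 1" if "a \<in> Npos" for a
    proof -
      define a' where "a' = ginv g a"
      then have "a' \<in> Npos" "a = g a'" using that assms by auto
      then show ?thesis using assms by (metis GG_linv Sperm_1 Sperm_Npos act_app)
    qed
  qed
  then show ?thesis using top by (simp add: GG_def)
qed

lemma act_iso: assumes "A \<in> GG" "g \<in> Sperm"
  shows "g \<in> iso (group_of_table A) (group_of_table (act g A))"
proof (rule isoI)
  show "g \<in> hom (group_of_table A) (group_of_table (act g A))"
    using assms by (simp add: hom_def group_of_table_def act_app Pi_def)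
  show "bij_betw g (carrier (group_of_table A)) (carrier (group_of_table (act g A)))"
  proof -
    have "bij_betw g Npos Npos" unfolding bij_betw_def
    proof (intro conjI)
      show "inj_on g Npos" using assms by (simp add: inj_on_def)
      show "g ` Npos = Npos"
      proof
        show "g ` Npos \<subseteq> Npos" using assms by auto
        show "Npos \<subseteq> g ` Npos"
        proof
          fix n assume "n \<in> Npos"
          then have "ginv g n \<in> Npos" "n = g (ginv g n)" using assms by auto
          then show "n \<in> g ` Npos" by blast
        qed
      qed
    qed
    then show ?thesis by (simp add: group_of_table_def)
  qed
qed

lemma act_is_iso: "A \<in> GG \<Longrightarrow> g \<in> Sperm \<Longrightarrow> group_of_table A \<cong> group_of_table (act g A)"
  using act_iso is_isoI by blast

lemma iso_act: assumes "A \<in> GG" "B \<in> GG" "group_of_table A \<cong> group_of_table B"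
  shows "\<exists>g\<in>Sperm. B = act g A"
proof -
  obtain \<phi> where phi: "\<phi> \<in> iso (group_of_table A) (group_of_table B)"
    using assms(3) by (auto simp: is_iso_def)
  have hom: "\<phi> \<in> hom (group_of_table A) (group_of_table B)" and bj: "bij_betw \<phi> Npos Npos"
    using phi by (auto simp: iso_def group_of_table_def)
  have mul: "\<phi> (A (a,b)) = B (\<phi> a, \<phi> b)" if "a \<in> Npos" "b \<in> Npos" for a b
    using hom that by (auto simp: hom_def group_of_table_def)
  have one: "\<phi> 1 = 1"
    using hom_one[OF hom GG_group[OF assms(1)] GG_group[OF assms(2)]] by (simp add: group_of_table_def)
  define g where "g = (\<lambda>n. if n \<in> Npos then \<phi> n else n)"
  have bijg: "bij g"
  proof -
    have "bij_betw g Npos Npos" using bj unfolding g_def by (rule bij_betw_cong[THEN iffD1, rotated]) auto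
    moreover have "bij_betw g (- Npos) (- Npos)" unfolding g_def bij_betw_def inj_on_def by auto
    ultimately have "bij_betw g (Npos \<union> - Npos) (Npos \<union> - Npos)"
      by (intro bij_betw_combine) auto
    then show ?thesis by simp
  qed
  have gS: "g \<in> Sperm" using bijg one by (simp add: Sperm_def g_def)
  have "act g A = B"
  proof (rule table_eqI)
    show "act g A \<in> topspace table_space" using act_top GG_top assms gS by blast
    show "B \<in> topspace table_space" using GG_top assms by blast
    fix i j assume ij: "i \<in> Npos" "j \<in> Npos"
    define a c where "a = ginv g i" "c = ginv g j"
    then have ac: "a \<in> Npos" "c \<in> Npos" "i = g a" "j = g c" using ij gS by auto
    have "act g A (i,j) = g (A (a,c))" using ac act_app[OF gS ac(1) ac(2)] by simp
    also have "\<dots> = \<phi> (A (a,c))" using GG_clo[OF assms(1) ac(1,2)] by (simp add: g_def)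
    also have "\<dots> = B (\<phi> a, \<phi> c)" using mul ac by simp
    also have "\<dots> = B (i,j)" using ac by (simp add: g_def)
    finally show "act g A (i,j) = B (i,j)" .
  qed
  then show ?thesis using gS by blast
qed


definition Cyl :: "(nat \<times> nat) set \<Rightarrow> (nat \<times> nat \<Rightarrow> nat) \<Rightarrow> (nat \<times> nat \<Rightarrow> nat) set" where
  "Cyl F A = {B \<in> GG. \<forall>ij\<in>F. B ij = A ij}"

definition LD :: "(nat \<times> nat \<Rightarrow> nat) set \<Rightarrow> (nat \<times> nat \<Rightarrow> nat) \<Rightarrow> bool" where
  "LD S y \<longleftrightarrow> (\<exists>F. finite F \<and> (\<forall>B\<in>Cyl F y. \<forall>F'. finite F' \<longrightarrow> Cyl F' B \<inter> S \<noteq> {}))"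

lemma topspace_GG: "topspace GG_space = GG"
  unfolding GG_space_def topspace_subtopology GG_def by blast

lemma Cyl_self: "y \<in> GG \<Longrightarrow> y \<in> Cyl F y" by (simp add: Cyl_def)

lemma Cyl_eq: "z \<in> Cyl F y \<Longrightarrow> Cyl F z = Cyl F y" by (auto simp: Cyl_def)

lemma Cyl_mono: "F \<subseteq> F' \<Longrightarrow> Cyl F' y \<subseteq> Cyl F y" by (auto simp: Cyl_def)

lemma Cyl_sub: "Cyl F y \<subseteq> GG" by (auto simp: Cyl_def)

lemma openin_GG: "openin GG_space U \<longleftrightarrow> U \<subseteq> GG \<and> (\<forall>y\<in>U. \<exists>F. finite F \<and> Cyl F y \<subseteq> U)"
proof
  assume "openin GG_space U"
  then obtain T where T: "openin table_space T" "U = T \<inter> GG"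
    by (auto simp: GG_space_def openin_subtopology)
  have "\<exists>F. finite F \<and> Cyl F y \<subseteq> U" if y: "y \<in> U" for y
  proof -
    obtain V where V: "finite {i \<in> Npos \<times> Npos. V i \<noteq> Npos}"
      "\<forall>i\<in>Npos \<times> Npos. V i \<subseteq> Npos" "y \<in> Pi\<^sub>E (Npos \<times> Npos) V" "Pi\<^sub>E (Npos \<times> Npos) V \<subseteq> T"
      using T y unfolding table_space_def openin_product_topology_alt by fastforce
    let ?F = "{i \<in> Npos \<times> Npos. V i \<noteq> Npos}"
    have "Cyl ?F y \<subseteq> U"
    proof
      fix B assume B: "B \<in> Cyl ?F y"
      then have BG: "B \<in> GG" by (simp add: Cyl_def)
      have "B \<in> Pi\<^sub>E (Npos \<times> Npos) V"
      proof -
        have "B i \<in> V i" if "i \<in> Npos \<times> Npos" for i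
        proof (cases "V i = Npos")
          case True then show ?thesis using that BG GG_top top_clo by (cases i) auto
        next
          case False then have "B i = y i" using B that unfolding Cyl_def by blast
          then show ?thesis using V(3) that by auto
        qed
        moreover have "B \<in> extensional (Npos \<times> Npos)"
          using BG GG_top by (auto simp: extensional_def top_ext)
        ultimately show ?thesis by (simp add: PiE_iff)
      qed
      then show "B \<in> U" using V(4) BG T(2) by auto
    qed
    then show ?thesis using V(1) by blast
  qed
  moreover have "U \<subseteq> GG" using T by auto
  ultimately show "U \<subseteq> GG \<and> (\<forall>y\<in>U. \<exists>F. finite F \<and> Cyl F y \<subseteq> U)" by blast
next
  assume A: "U \<subseteq> GG \<and> (\<forall>y\<in>U. \<exists>F. finite F \<and> Cyl F y \<subseteq> U)"
  define T where "T = {B \<in> topspace table_space. \<exists>y\<in>U. \<exists>F. finite F \<and> Cyl F y \<subseteq> U \<and> (\<forall>i\<in>F. B i = y i)}"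
  have "openin table_space T"
    unfolding table_space_def openin_product_topology_alt
  proof
    fix B assume B: "B \<in> T"
    then obtain y F where yF: "y \<in> U" "finite F" "Cyl F y \<subseteq> U" "\<forall>i\<in>F. B i = y i"
      by (auto simp: T_def)
    have Btop: "B \<in> topspace table_space" using B by (simp add: T_def)
    define V where "V = (\<lambda>i. if i \<in> F then {B i} else Npos)"
    have "finite {i \<in> Npos \<times> Npos. V i \<noteq> topspace (discrete_topology Npos)}"
      by (rule finite_subset[OF _ yF(2)]) (auto simp: V_def)
    moreover have "\<forall>i\<in>Npos \<times> Npos. openin (discrete_topology Npos) (V i)"
      using Btop top_clo by (auto simp: V_def)
    moreover have "B \<in> Pi\<^sub>E (Npos \<times> Npos) V"
      using Btop by (auto simp: V_def topspace_table PiE_iff)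
    moreover have "Pi\<^sub>E (Npos \<times> Npos) V \<subseteq> T"
    proof
      fix B' assume B': "B' \<in> Pi\<^sub>E (Npos \<times> Npos) V"
      have B'top: "B' \<in> topspace table_space"
        using B' Btop by (fastforce simp: topspace_table PiE_iff V_def split: if_splits)
      have "B' i = y i" if "i \<in> F" for i
      proof (cases "i \<in> Npos \<times> Npos")
        case True
        have "B' i \<in> V i" using B' True by (metis PiE_E)
        then have "B' i = B i" using that by (simp add: V_def)
        then show ?thesis using yF(4) that by simp
      next
        case False then show ?thesis
        proof -
          have "B' i = undefined" using B' False by (meson PiE_arb)
          moreover have "B i = undefined" using Btop False by (cases i) (simp add: top_ext)
          ultimately show ?thesis using yF(4) that by simp
        qed
      qed
      then have "\<forall>i\<in>F. B' i = y i" by blast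
      then show "B' \<in> T" unfolding T_def using B'top yF(1-3) by blast
    qed
    ultimately show "\<exists>V. finite {i \<in> Npos \<times> Npos. V i \<noteq> topspace (discrete_topology Npos)} \<and>
      (\<forall>i\<in>Npos \<times> Npos. openin (discrete_topology Npos) (V i)) \<and>
      B \<in> Pi\<^sub>E (Npos \<times> Npos) V \<and> Pi\<^sub>E (Npos \<times> Npos) V \<subseteq> T" by blast
  qed
  moreover have "U = T \<inter> GG"
  proof
    show "U \<subseteq> T \<inter> GG"
    proof
      fix y assume y: "y \<in> U"
      then obtain F where "finite F" "Cyl F y \<subseteq> U" using A by blast
      then show "y \<in> T \<inter> GG" using y A GG_top by (auto simp: T_def)
    qed
    show "T \<inter> GG \<subseteq> U"
    proof
      fix B assume "B \<in> T \<inter> GG"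
      then obtain y F where "y \<in> U" "Cyl F y \<subseteq> U" "\<forall>i\<in>F. B i = y i" "B \<in> GG"
        by (auto simp: T_def)
      then show "B \<in> U" by (auto simp: Cyl_def)
    qed
  qed
  ultimately show "openin GG_space U"
    unfolding GG_space_def openin_subtopology by blast
qed

lemma openin_Cyl: "finite F \<Longrightarrow> openin GG_space (Cyl F y)"
proof -
  assume F: "finite F"
  have "\<forall>z\<in>Cyl F y. \<exists>F'. finite F' \<and> Cyl F' z \<subseteq> Cyl F y"
  proof
    fix z assume "z \<in> Cyl F y"
    then have "Cyl F z = Cyl F y" by (rule Cyl_eq)
    then show "\<exists>F'. finite F' \<and> Cyl F' z \<subseteq> Cyl F y" using F by blast
  qed
  then show ?thesis unfolding openin_GG using Cyl_sub by blast
qed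

lemma int_cl_LD: assumes "y \<in> GG"
  shows "y \<in> GG_space interior_of (GG_space closure_of N) \<longleftrightarrow> LD N y"
proof
  assume "y \<in> GG_space interior_of (GG_space closure_of N)"
  then obtain T where T: "openin GG_space T" "y \<in> T" "T \<subseteq> GG_space closure_of N"
    unfolding interior_of_def by blast
  then obtain F where F: "finite F" "Cyl F y \<subseteq> T" unfolding openin_GG by blast
  have "Cyl F' B \<inter> N \<noteq> {}" if "B \<in> Cyl F y" "finite F'" for B F'
  proof -
    have "B \<in> GG_space closure_of N" using that F T by blast
    then have cl: "\<And>T. B \<in> T \<Longrightarrow> openin GG_space T \<Longrightarrow> (\<exists>z. z \<in> N \<and> z \<in> T)"
      unfolding in_closure_of by blast
    have "B \<in> Cyl F' B" using that by (simp add: Cyl_def)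
    from cl[OF this openin_Cyl[OF that(2)]] show ?thesis by blast
  qed
  then show "LD N y" using F unfolding LD_def by blast
next
  assume "LD N y"
  then have "\<exists>F. finite F \<and> (\<forall>B\<in>Cyl F y. \<forall>F'. finite F' \<longrightarrow> Cyl F' B \<inter> N \<noteq> {})"
    unfolding LD_def .
  then obtain F where F0: "finite F \<and> (\<forall>B\<in>Cyl F y. \<forall>F'. finite F' \<longrightarrow> Cyl F' B \<inter> N \<noteq> {})" ..
  have F: "finite F" "\<forall>B\<in>Cyl F y. \<forall>F'. finite F' \<longrightarrow> Cyl F' B \<inter> N \<noteq> {}"
    using F0 by simp_all
  have "Cyl F y \<subseteq> GG_space closure_of N"
  proof
    fix B assume B: "B \<in> Cyl F y"
    have cl: "\<exists>z. z \<in> N \<and> z \<in> T" if "B \<in> T" "openin GG_space T" for T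
    proof -
      have "\<forall>z\<in>T. \<exists>F. finite F \<and> Cyl F z \<subseteq> T" using that(2) by (simp add: openin_GG)
      then have "\<exists>F. finite F \<and> Cyl F B \<subseteq> T" using that(1) by (rule bspec)
      then obtain F' where F'0: "finite F' \<and> Cyl F' B \<subseteq> T" ..
      then have F': "finite F'" "Cyl F' B \<subseteq> T" by simp_all
      have "Cyl F' B \<inter> N \<noteq> {}" using F(2) B F'(1) by simp
      then obtain z where "z \<in> Cyl F' B" "z \<in> N" by blast
      then show ?thesis using F'(2) by blast
    qed
    have top: "B \<in> topspace GG_space" unfolding topspace_GG using B Cyl_sub by blast
    show "B \<in> GG_space closure_of N" unfolding in_closure_of using top cl by blast
  qed
  moreover have "y \<in> Cyl F y" using Cyl_self[OF assms] .
  moreover have "openin GG_space (Cyl F y)" using openin_Cyl[OF F(1)] .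
  ultimately show "y \<in> GG_space interior_of (GG_space closure_of N)"
    unfolding interior_of_def mem_Collect_eq by blast
qed

lemma nowhere_dense_LD:
  "nowhere_dense_in GG_space N \<longleftrightarrow> N \<subseteq> GG \<and> (\<forall>y\<in>GG. \<not> LD N y)"
proof -
  have sub: "GG_space interior_of (GG_space closure_of N) \<subseteq> GG"
    using interior_of_subset_topspace[of GG_space] unfolding topspace_GG .
  have "GG_space interior_of (GG_space closure_of N) = {} \<longleftrightarrow> (\<forall>y\<in>GG. \<not> LD N y)"
  proof
    assume "GG_space interior_of (GG_space closure_of N) = {}"
    then show "\<forall>y\<in>GG. \<not> LD N y" using int_cl_LD by blast
  next
    assume "\<forall>y\<in>GG. \<not> LD N y"
    then show "GG_space interior_of (GG_space closure_of N) = {}" using int_cl_LD sub by blast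
  qed
  then show ?thesis unfolding nowhere_dense_in_def topspace_GG by blast
qed


definition sw :: "nat \<Rightarrow> nat \<Rightarrow> nat \<Rightarrow> nat" where
  "sw a b = (\<lambda>x. if x = a then b else if x = b then a else x)"

lemma sw_bij: "bij (sw a b)"
proof -
  have sw2: "sw a b (sw a b x) = x" for x by (auto simp: sw_def)
  have ss: "sw a b \<circ> sw a b = id"
  proof (rule ext)
    fix x show "(sw a b \<circ> sw a b) x = id x" using sw2[of x] by (simp only: comp_apply id_apply)
  qed
  show ?thesis by (rule o_bij[OF ss ss])
qed

lemma ext_perm:
  fixes f :: "nat \<Rightarrow> nat" and D :: "nat set"
  assumes "finite D" "inj_on f D" "0 \<notin> D" "0 \<notin> f ` D"
  shows "\<exists>g. bij g \<and> g 0 = 0 \<and> (\<forall>d\<in>D. g d = f d)"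
  using assms
proof (induction D rule: finite_induct)
  case empty
  show ?case by (intro exI[of _ id] conjI bij_id) simp_all
next
  case (insert d D)
  have "inj_on f D" "0 \<notin> D" "0 \<notin> f ` D" using insert.prems by auto
  then obtain g where g: "bij g" "g 0 = 0" "\<forall>e\<in>D. g e = f e" using insert.IH by blast
  define g' where "g' = sw (f d) (g d) \<circ> g"
  have ginj: "g a = g b \<longleftrightarrow> a = b" for a b using g(1) by (auto simp: bij_def inj_def)
  have "bij g'" unfolding g'_def using sw_bij g(1) by (rule bij_comp[rotated])
  moreover have "g' 0 = 0"
  proof -
    have "f d \<noteq> 0" using insert.prems by auto
    moreover have "g d \<noteq> 0" using insert.prems g(2) ginj[of d 0] by auto
    ultimately show ?thesis using g(2) by (simp add: g'_def sw_def)
  qed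
  moreover have "\<forall>e\<in>insert d D. g' e = f e"
  proof
    fix e assume e: "e \<in> insert d D"
    show "g' e = f e"
    proof (cases "e = d")
      case True then show ?thesis by (simp add: g'_def sw_def)
    next
      case False
      then have eD: "e \<in> D" using e by simp
      have "f e \<noteq> f d" using insert.prems(1) eD False insert.hyps(2) by (auto simp: inj_on_def)
      moreover have "g e \<noteq> g d" using ginj False by simp
      ultimately show ?thesis using g(3) eD by (simp add: g'_def sw_def)
    qed
  qed
  ultimately show ?case by blast
qed

lemma infinite_Npos: "infinite Npos"
  unfolding infinite_nat_iff_unbounded
proof
  fix m :: nat
  have "Suc m > m" "Suc m \<in> Npos" by (simp_all add: Npos_iff)
  then show "\<exists>n>m. n \<in> Npos" by blast
qed

lemma ex_phi0: "\<exists>\<phi>. bij_betw \<phi> (Npos \<times> Npos) Npos"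
proof -
  obtain g1 where g1: "bij_betw g1 (UNIV :: nat set) Npos"
    using countable_infiniteE'[OF countableI_type infinite_Npos] by blast
  have "infinite (Npos \<times> Npos)"
    using infinite_Npos finite_cartesian_productD1[of Npos Npos] by (metis empty_iff one_Npos)
  then obtain g2 where g2: "bij_betw g2 (UNIV :: nat set) (Npos \<times> Npos)"
    using countable_infiniteE'[OF countableI_type] by blast
  have "bij_betw (g1 \<circ> inv_into UNIV g2) (Npos \<times> Npos) Npos"
    by (rule bij_betw_trans[OF bij_betw_inv_into[OF g2] g1])
  then show ?thesis by blast
qed


lemma Npos_Suc[simp]: "Suc n \<in> Npos" by (simp add: Npos_iff)

lemma bij0_Npos: assumes "bij g" "g 0 = 0" shows "bij_betw g Npos Npos"
  unfolding bij_betw_def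
proof
  have inj: "inj g" using assms(1) by (simp add: bij_def)
  then show "inj_on g Npos" by (rule inj_on_subset) simp
  show "g ` Npos = Npos"
  proof
    show "g ` Npos \<subseteq> Npos"
    proof
      fix m assume "m \<in> g ` Npos"
      then obtain n where n: "n \<in> Npos" "m = g n" by blast
      have "g n \<noteq> g 0" using inj n(1) by (metis Npos_iff injD)
      then show "m \<in> Npos" using n assms(2) by (simp add: Npos_iff)
    qed
    show "Npos \<subseteq> g ` Npos"
    proof
      fix m assume m: "m \<in> Npos"
      have sj: "surj g" using assms(1) by (simp add: bij_def)
      then obtain n where n: "m = g n" by (metis surjD)
      have "n \<noteq> 0"
      proof
        assume "n = 0"
        then have "m = 0" using n assms(2) by simp
        then show False using m by (simp add: Npos_iff)
      qed
      then show "m \<in> g ` Npos" using n by (simp add: Npos_iff)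
    qed
  qed
qed

lemma Trans:
  assumes A1: "A1 \<in> GG" and A2: "A2 \<in> GG" and F1: "finite F1" and F2: "finite F2"
  shows "\<exists>\<pi>\<in>Sperm. \<exists>B1\<in>Cyl F1 A1. act \<pi> B1 \<in> Cyl F2 A2"
proof -
  define E1 where "E1 = (fst ` F1 \<union> snd ` F1 \<union> A1 ` F1 \<union> {1}) \<inter> Npos"
  define E2 where "E2 = (fst ` F2 \<union> snd ` F2 \<union> A2 ` F2 \<union> {1}) \<inter> Npos"
  have E1fin: "finite E1" unfolding E1_def using F1 by simp
  have E2fin: "finite E2" unfolding E2_def using F2 by simp
  have E1N: "E1 \<subseteq> Npos" "1 \<in> E1" unfolding E1_def by auto
  have E2N: "E2 \<subseteq> Npos" "1 \<in> E2" unfolding E2_def by auto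
  have E1clo: "i \<in> E1 \<and> j \<in> E1 \<and> A1 (i,j) \<in> E1" if "i \<in> Npos" "j \<in> Npos" "(i,j) \<in> F1" for i j
  proof -
    have "i \<in> fst ` F1" "j \<in> snd ` F1" "A1 (i,j) \<in> A1 ` F1" using that(3) by force+
    moreover have "A1 (i,j) \<in> Npos" using GG_clo[OF A1 that(1,2)] .
    ultimately show ?thesis using that(1,2) unfolding E1_def by blast
  qed
  have E2clo: "i \<in> E2 \<and> j \<in> E2 \<and> A2 (i,j) \<in> E2" if "i \<in> Npos" "j \<in> Npos" "(i,j) \<in> F2" for i j
  proof -
    have "i \<in> fst ` F2" "j \<in> snd ` F2" "A2 (i,j) \<in> A2 ` F2" using that(3) by force+
    moreover have "A2 (i,j) \<in> Npos" using GG_clo[OF A2 that(1,2)] .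
    ultimately show ?thesis using that(1,2) unfolding E2_def by blast
  qed
  obtain \<phi>0 where \<phi>0: "bij_betw \<phi>0 (Npos \<times> Npos) Npos" using ex_phi0 by blast
  define f where "f a = \<phi>0 (a,1)" for a
  have injf: "inj_on f E1"
  proof (rule inj_onI)
    fix a a' assume "a \<in> E1" "a' \<in> E1" "f a = f a'"
    then have "(a,1) \<in> Npos \<times> Npos" "(a',1) \<in> Npos \<times> Npos" "\<phi>0 (a,1) = \<phi>0 (a',1)"
      using E1N by (auto simp: f_def)
    then have "(a,1) = (a',1)" using \<phi>0 unfolding bij_betw_def inj_on_def by blast
    then show "a = a'" by simp
  qed
  have "0 \<notin> E1" using E1N by auto
  moreover have "0 \<notin> f ` E1"
  proof
    assume "0 \<in> f ` E1"
    then obtain a where "a \<in> E1" "\<phi>0 (a,1) = 0" by (auto simp: f_def)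
    moreover have "(a,1) \<in> Npos \<times> Npos" using \<open>a \<in> E1\<close> E1N by auto
    ultimately have "\<phi>0 (a,1) \<in> Npos" "\<phi>0 (a,1) = 0" using bij_betwE[OF \<phi>0] by blast+
    then show False by simp
  qed
  ultimately obtain \<sigma> where \<sigma>: "bij \<sigma>" "\<sigma> 0 = 0" "\<forall>a\<in>E1. \<sigma> a = f a"
    using ext_perm[OF E1fin injf] by blast
  have \<sigma>i: "bij (inv_into UNIV \<sigma>)" "inv_into UNIV \<sigma> 0 = 0"
    using \<sigma> by (simp_all add: bij_imp_bij_inv bij_is_inj inv_f_eq)
  define \<phi> where "\<phi> u = inv_into UNIV \<sigma> (\<phi>0 u)" for u
  have \<phi>bij: "bij_betw \<phi> (Npos \<times> Npos) Npos"
  proof -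
    have "bij_betw (inv_into UNIV \<sigma> \<circ> \<phi>0) (Npos \<times> Npos) Npos"
      by (rule bij_betw_trans[OF \<phi>0 bij0_Npos[OF \<sigma>i]])
    then show ?thesis unfolding \<phi>_def comp_def .
  qed
  have \<phi>a: "\<phi> (a,1) = a" if "a \<in> E1" for a
    using that \<sigma>(3) \<sigma>(1) unfolding \<phi>_def f_def by (metis bij_is_inj inv_f_f)
  define \<psi> where "\<psi> = inv_into (Npos \<times> Npos) \<phi>"
  have \<psi>bij: "bij_betw \<psi> Npos (Npos \<times> Npos)" unfolding \<psi>_def by (rule bij_betw_inv_into[OF \<phi>bij])
  have \<psi>\<phi>: "\<psi> (\<phi> u) = u" if "u \<in> Npos \<times> Npos" for u
    unfolding \<psi>_def using bij_betw_inv_into_left[OF \<phi>bij that] .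
  have \<phi>\<psi>: "\<phi> (\<psi> i) = i" if "i \<in> Npos" for i
    unfolding \<psi>_def using bij_betw_inv_into_right[OF \<phi>bij that] .
  have \<psi>N: "\<psi> i \<in> Npos \<times> Npos" if "i \<in> Npos" for i using bij_betwE[OF \<psi>bij] that by blast
  have \<phi>N: "\<phi> u \<in> Npos" if "u \<in> Npos \<times> Npos" for u using bij_betwE[OF \<phi>bij] that by blast
  have \<psi>a: "\<psi> a = (a,1)" if "a \<in> E1" for a
  proof -
    have "(a,1) \<in> Npos \<times> Npos" using that E1N by auto
    then show ?thesis using \<psi>\<phi> \<phi>a[OF that] by metis
  qed
  have \<psi>1: "\<psi> 1 = (1,1)" using \<psi>a[OF E1N(2)] .
  have \<phi>1: "\<phi> (1,1) = 1" using \<phi>a[OF E1N(2)] .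
  define P where "P u v = (A1 (fst u, fst v), A2 (snd u, snd v))" for u v :: "nat \<times> nat"
  have Pclo: "P u v \<in> Npos \<times> Npos" if "u \<in> Npos \<times> Npos" "v \<in> Npos \<times> Npos" for u v
    using that GG_clo[OF A1] GG_clo[OF A2] unfolding P_def by (auto simp: mem_Times_iff)
  have Pass: "P (P u v) w = P u (P v w)" if "u \<in> Npos \<times> Npos" "v \<in> Npos \<times> Npos" "w \<in> Npos \<times> Npos" for u v w
    using that GG_ass[OF A1] GG_ass[OF A2] unfolding P_def by (auto simp: mem_Times_iff)
  have Pone: "P (1,1) v = v" if "v \<in> Npos \<times> Npos" for v
    using that GG_lone[OF A1] GG_lone[OF A2] unfolding P_def by (auto simp: mem_Times_iff)
  define B1 where "B1 = (\<lambda>(i,j). if i \<in> Npos \<and> j \<in> Npos then \<phi> (P (\<psi> i) (\<psi> j)) else undefined)"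
  have B1app: "B1 (i,j) = \<phi> (P (\<psi> i) (\<psi> j))" if "i \<in> Npos" "j \<in> Npos" for i j
    using that by (simp add: B1_def)
  have B1clo: "B1 (i,j) \<in> Npos" if "i \<in> Npos" "j \<in> Npos" for i j
    using B1app[OF that] \<phi>N Pclo \<psi>N that by simp
  have B1top: "B1 \<in> topspace table_space"
    unfolding topspace_table PiE_iff
  proof
    show "\<forall>ij\<in>Npos \<times> Npos. B1 ij \<in> Npos" using B1clo by auto
    show "B1 \<in> extensional (Npos \<times> Npos)" unfolding extensional_def B1_def by auto
  qed
  have "group (group_of_table B1)"
  proof (rule table_groupI)
    show "B1 (a,b) \<in> Npos" if "a \<in> Npos" "b \<in> Npos" for a b using B1clo that .
    show "B1 (B1 (a,b), c) = B1 (a, B1 (b,c))" if "a \<in> Npos" "b \<in> Npos" "c \<in> Npos" for a b c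
    proof -
      have "B1 (B1 (a,b), c) = \<phi> (P (P (\<psi> a) (\<psi> b)) (\<psi> c))"
        using that B1clo B1app \<psi>\<phi> Pclo \<psi>N by simp
      also have "\<dots> = \<phi> (P (\<psi> a) (P (\<psi> b) (\<psi> c)))" using Pass \<psi>N that by simp
      also have "\<dots> = B1 (a, B1 (b,c))"
        using that B1clo B1app \<psi>\<phi> Pclo \<psi>N by simp
      finally show ?thesis .
    qed
    show "B1 (1,a) = a" if "a \<in> Npos" for a
      using that B1app \<psi>1 Pone \<psi>N \<phi>\<psi> by simp
    show "\<exists>b\<in>Npos. B1 (b,a) = 1" if aN: "a \<in> Npos" for a
    proof -
      obtain a1 a2 where a12: "\<psi> a = (a1,a2)" "a1 \<in> Npos" "a2 \<in> Npos" using \<psi>N[OF aN] by (cases "\<psi> a") auto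
      obtain b1 where b1: "b1 \<in> Npos" "A1 (b1,a1) = 1" using GG_linv[OF A1 a12(2)] by blast
      obtain b2 where b2: "b2 \<in> Npos" "A2 (b2,a2) = 1" using GG_linv[OF A2 a12(3)] by blast
      have bN: "\<phi> (b1,b2) \<in> Npos" using \<phi>N b1 b2 by simp
      have "B1 (\<phi> (b1,b2), a) = \<phi> (P (b1,b2) (a1,a2))"
        using B1app[OF bN aN] \<psi>\<phi> b1 b2 a12 by simp
      also have "\<dots> = 1" using b1 b2 \<phi>1 by (simp add: P_def)
      finally show ?thesis using bN by blast
    qed
  qed
  then have B1G: "B1 \<in> GG" using B1top by (simp add: GG_def)
  have B1cyl: "B1 \<in> Cyl F1 A1"
    unfolding Cyl_def
  proof (intro CollectI conjI ballI)
    show "B1 \<in> GG" by (rule B1G)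
    fix ij assume ij: "ij \<in> F1"
    obtain i j where ij': "ij = (i,j)" by (cases ij)
    show "B1 ij = A1 ij"
    proof (cases "i \<in> Npos \<and> j \<in> Npos")
      case True
      then have E: "i \<in> E1" "j \<in> E1" "A1 (i,j) \<in> E1" using E1clo ij ij' by blast+
      have "B1 (i,j) = \<phi> (P (i,1) (j,1))" using B1app True \<psi>a E by simp
      also have "\<dots> = \<phi> (A1 (i,j), 1)" using GG_lone[OF A2] by (simp add: P_def)
      also have "\<dots> = A1 (i,j)" using \<phi>a E(3) by simp
      finally show ?thesis using ij' by simp
    next
      case False
      then show ?thesis using ij' top_ext[OF GG_top[OF A1]] by (auto simp: B1_def)
    qed
  qed
  define D where "D = (\<lambda>b. \<phi> (1,b)) ` E2"
  define g where "g i = snd (\<psi> i)" for i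
  have gD: "g (\<phi> (1,b)) = b" if "b \<in> E2" for b
  proof -
    have "(1,b) \<in> Npos \<times> Npos" using that E2N by auto
    then show ?thesis unfolding g_def using \<psi>\<phi> by simp
  qed
  have injg: "inj_on g D"
  proof (rule inj_onI)
    fix u v assume u: "u \<in> D" and v: "v \<in> D" and eq: "g u = g v"
    obtain b where b: "b \<in> E2" "u = \<phi> (1,b)" using u unfolding D_def by blast
    obtain b' where b': "b' \<in> E2" "v = \<phi> (1,b')" using v unfolding D_def by blast
    have "b = b'" using eq gD[OF b(1)] gD[OF b'(1)] b(2) b'(2) by simp
    then show "u = v" using b(2) b'(2) by simp
  qed
  have DN: "D \<subseteq> Npos" unfolding D_def using \<phi>N E2N by auto
  have gDE: "g ` D = E2" unfolding D_def image_image using gD by simp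
  have "finite D" unfolding D_def using E2fin by simp
  moreover have "0 \<notin> D" using DN by auto
  moreover have "0 \<notin> g ` D" using gDE E2N by auto
  ultimately obtain \<pi> where \<pi>: "bij \<pi>" "\<pi> 0 = 0" "\<forall>d\<in>D. \<pi> d = g d"
    using ext_perm[OF _ injg] by blast
  have \<pi>D: "\<pi> (\<phi> (1,b)) = b" if "b \<in> E2" for b
  proof -
    have "\<phi> (1,b) \<in> D" unfolding D_def using that by blast
    then show ?thesis using \<pi>(3) gD[OF that] by simp
  qed
  have "\<pi> 1 = 1" using \<pi>D[OF E2N(2)] \<phi>1 by simp
  then have \<pi>S: "\<pi> \<in> Sperm" using \<pi> by (simp add: Sperm_def)
  have "act \<pi> B1 \<in> Cyl F2 A2"
    unfolding Cyl_def
  proof (intro CollectI conjI ballI)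
    show "act \<pi> B1 \<in> GG" by (rule act_GG[OF B1G \<pi>S])
    fix bd assume bd: "bd \<in> F2"
    obtain b d where bd': "bd = (b,d)" by (cases bd)
    show "act \<pi> B1 bd = A2 bd"
    proof (cases "b \<in> Npos \<and> d \<in> Npos")
      case True
      then have E: "b \<in> E2" "d \<in> E2" "A2 (b,d) \<in> E2" using E2clo bd bd' by blast+
      have iN: "\<phi> (1,b) \<in> Npos" "\<phi> (1,d) \<in> Npos" using \<phi>N True by auto
      have ps: "\<psi> (\<phi> (1,b)) = (1,b)" "\<psi> (\<phi> (1,d)) = (1,d)" using \<psi>\<phi> True by auto
      have "act \<pi> B1 (b,d) = act \<pi> B1 (\<pi> (\<phi> (1,b)), \<pi> (\<phi> (1,d)))" using \<pi>D E by simp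
      also have "\<dots> = \<pi> (B1 (\<phi> (1,b), \<phi> (1,d)))" using act_app[OF \<pi>S iN] .
      also have "\<dots> = \<pi> (\<phi> (P (1,b) (1,d)))" using B1app[OF iN] ps by simp
      also have "\<dots> = \<pi> (\<phi> (1, A2 (b,d)))" using GG_lone[OF A1] by (simp add: P_def)
      also have "\<dots> = A2 (b,d)" using \<pi>D E(3) by simp
      finally show ?thesis using bd' by simp
    next
      case False
      then have "(b,d) \<notin> Npos \<times> Npos" by simp
      then show ?thesis using bd' act_out top_ext[OF GG_top[OF A2]] by simp
    qed
  qed
  then show ?thesis using \<pi>S B1cyl by blast
qed


definition perm_set :: "(nat \<times> nat) list \<Rightarrow> (nat \<Rightarrow> nat) set" where
  "perm_set p = {g \<in> Sperm. \<forall>(a,b)\<in>set p. g a = b}"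

definition orb :: "(nat \<times> nat) list \<Rightarrow> (nat \<times> nat \<Rightarrow> nat) \<Rightarrow> (nat \<times> nat \<Rightarrow> nat) set" where
  "orb p x = (\<lambda>g. act g x) ` perm_set p"

definition pim :: "(nat \<Rightarrow> nat) \<Rightarrow> (nat \<times> nat) set \<Rightarrow> (nat \<times> nat) set" where
  "pim g F = (\<lambda>(i,j). (g i, g j)) ` F"

lemma perm_set_Sperm: "g \<in> perm_set p \<Longrightarrow> g \<in> Sperm" by (simp add: perm_set_def)
lemma perm_set_nil: "perm_set [] = Sperm" by (simp add: perm_set_def)

lemma orb_sub: assumes "x \<in> GG" shows "orb p x \<subseteq> GG"
proof
  fix z assume "z \<in> orb p x"
  then obtain g where g: "g \<in> perm_set p" "z = act g x" unfolding orb_def by (rule imageE)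
  show "z \<in> GG" using act_GG[OF assms perm_set_Sperm[OF g(1)]] g(2) by simp
qed

lemma LD_I: assumes "finite F" "\<And>B F'. B \<in> Cyl F y \<Longrightarrow> finite F' \<Longrightarrow> \<exists>z. z \<in> Cyl F' B \<and> z \<in> S"
  shows "LD S y"
  unfolding LD_def
proof (intro exI conjI ballI allI impI)
  show "finite F" by (rule assms(1))
  fix B and F' :: "(nat \<times> nat) set" assume "B \<in> Cyl F y" "finite F'"
  then obtain z where "z \<in> Cyl F' B" "z \<in> S" using assms(2) by blast
  then show "Cyl F' B \<inter> S \<noteq> {}" by auto
qed

lemma LD_E: assumes "LD S y"
  obtains F where "finite F" "\<And>B F'. B \<in> Cyl F y \<Longrightarrow> finite F' \<Longrightarrow> \<exists>z. z \<in> Cyl F' B \<and> z \<in> S"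
proof -
  obtain F where F: "finite F" "\<forall>B\<in>Cyl F y. \<forall>F'. finite F' \<longrightarrow> Cyl F' B \<inter> S \<noteq> {}"
    using assms unfolding LD_def by (elim exE conjE)
  have "\<exists>z. z \<in> Cyl F' B \<and> z \<in> S" if "B \<in> Cyl F y" "finite F'" for B F'
  proof -
    have "Cyl F' B \<inter> S \<noteq> {}" using F(2) that by simp
    then show ?thesis by auto
  qed
  then show ?thesis using that F(1) by blast
qed

lemma LD_mono: assumes "LD S y" "S \<subseteq> S'" shows "LD S' y"
proof -
  obtain F where "finite F" "\<And>B F'. B \<in> Cyl F y \<Longrightarrow> finite F' \<Longrightarrow> \<exists>z. z \<in> Cyl F' B \<and> z \<in> S"
    using assms(1) by (rule LD_E) blast
  then show ?thesis using assms(2) by (intro LD_I[of F]) blast+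
qed

lemma pim_inv1: "g \<in> Sperm \<Longrightarrow> pim g (pim (ginv g) F) = F"
proof -
  assume g: "g \<in> Sperm"
  have "(\<lambda>(i,j). (g i, g j)) \<circ> (\<lambda>(i,j). (ginv g i, ginv g j)) = id"
    using g by (auto simp: fun_eq_iff)
  then show ?thesis unfolding pim_def image_comp by simp
qed

lemma pim_inv2: "g \<in> Sperm \<Longrightarrow> pim (ginv g) (pim g F) = F"
proof -
  assume g: "g \<in> Sperm"
  have "(\<lambda>(i,j). (ginv g i, ginv g j)) \<circ> (\<lambda>(i,j). (g i, g j)) = id"
    using g by (auto simp: fun_eq_iff)
  then show ?thesis unfolding pim_def image_comp by simp
qed

lemma finite_pim: "finite F \<Longrightarrow> finite (pim g F)" by (simp add: pim_def)

lemma act_Cyl: assumes "g \<in> Sperm" "B \<in> Cyl F A" "A \<in> GG"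
  shows "act g B \<in> Cyl (pim g F) (act g A)"
proof -
  have BG: "B \<in> GG" using assms(2) by (simp add: Cyl_def)
  have "act g B (g i, g j) = act g A (g i, g j)" if "(i,j) \<in> F" for i j
  proof (cases "i \<in> Npos \<and> j \<in> Npos")
    case True then show ?thesis using assms that by (simp add: act_app Cyl_def)
  next
    case False then show ?thesis using assms(1) by (simp add: act_out)
  qed
  then show ?thesis using act_GG[OF BG assms(1)] by (auto simp: Cyl_def pim_def)
qed

lemma LD_act: assumes g: "g \<in> Sperm" and z: "z \<in> GG" and LD: "LD S z"
  shows "LD (act g ` S) (act g z)"
proof -
  obtain F where F: "finite F" "\<And>B F'. B \<in> Cyl F z \<Longrightarrow> finite F' \<Longrightarrow> \<exists>z. z \<in> Cyl F' B \<and> z \<in> S"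
    using LD by (rule LD_E) blast
  have gi: "ginv g \<in> Sperm" using g by (rule Sperm_inv)
  have main: "\<exists>z. z \<in> Cyl F' B \<and> z \<in> act g ` S" if B: "B \<in> Cyl (pim g F) (act g z)" and F': "finite F'" for B F'
  proof -
    have BG: "B \<in> GG" using B by (simp add: Cyl_def)
    have B0: "act (ginv g) B \<in> Cyl F z"
      using act_Cyl[OF gi B act_GG[OF z g]] pim_inv2[OF g] act_inv_act[OF GG_top[OF z] g] by simp
    then obtain s where s: "s \<in> Cyl (pim (ginv g) F') (act (ginv g) B)" "s \<in> S"
      using F(2) finite_pim[OF F'] by meson
    have "act g s \<in> Cyl F' B"
      using act_Cyl[OF g s(1) act_GG[OF BG gi]] pim_inv1[OF g] act_act_inv[OF GG_top[OF BG] g] by simp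
    then show ?thesis using s(2) by blast
  qed
  show ?thesis by (rule LD_I[OF finite_pim[OF F(1)] main])
qed

lemma LD_nonempty: assumes "LD S y" "y \<in> GG" shows "S \<noteq> {}"
proof -
  obtain F where "finite F" "\<And>B F'. B \<in> Cyl F y \<Longrightarrow> finite F' \<Longrightarrow> \<exists>z. z \<in> Cyl F' B \<and> z \<in> S"
    using assms(1) by (rule LD_E) blast
  then obtain z where "z \<in> S" using Cyl_self[OF assms(2)] by blast
  then show ?thesis by blast
qed

lemma LD_entry: assumes LD: "LD (orb p x) y" and y: "y \<in> GG"
  and ab: "(a,b) \<in> set p" and cd: "(c,d) \<in> set p" and ef: "(e,f) \<in> set p"
  and ac: "a \<in> Npos" "c \<in> Npos" and e: "x (a,c) = e"
  shows "y (b,d) = f"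
proof -
  obtain F where F: "finite F" "\<And>B F'. B \<in> Cyl F y \<Longrightarrow> finite F' \<Longrightarrow> \<exists>z. z \<in> Cyl F' B \<and> z \<in> orb p x"
    using LD by (rule LD_E) blast
  then obtain z where z: "z \<in> Cyl {(b,d)} y" "z \<in> orb p x" using Cyl_self[OF y] by blast
  then obtain h where h: "h \<in> perm_set p" "z = act h x" by (auto simp: orb_def)
  have hS: "h \<in> Sperm" using h by (simp add: perm_set_def)
  have "h a = b" "h c = d" "h e = f" using h ab cd ef by (auto simp: perm_set_def)
  then have "z (b,d) = f" using act_app[OF hS ac, of x] h e by simp
  then show ?thesis using z by (simp add: Cyl_def)
qed


lemma orb_nil_act: "g \<in> Sperm \<Longrightarrow> act g x \<in> orb [] x"
  unfolding orb_def perm_set_nil by (rule imageI)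

lemma act_orb_nil: assumes "\<pi> \<in> Sperm" shows "act \<pi> ` orb [] x \<subseteq> orb [] x"
proof
  fix w assume "w \<in> act \<pi> ` orb [] x"
  then obtain g where g: "g \<in> Sperm" "w = act \<pi> (act g x)" unfolding orb_def perm_set_nil by blast
  then have "w = act (\<pi> \<circ> g) x" using act_comp[OF assms g(1)] by simp
  then show "w \<in> orb [] x" using orb_nil_act[OF Sperm_comp[OF assms g(1)]] by simp
qed

lemma notmeager_nd:
  assumes x: "x \<in> GG" and nm: "\<not> meager_in GG_space (orb [] x)"
    and c: "countable Fam" and cov: "orb [] x \<subseteq> \<Union>Fam"
  shows "\<exists>N\<in>Fam. \<not> nowhere_dense_in GG_space N"
proof (rule ccontr)
  assume "\<not> (\<exists>N\<in>Fam. \<not> nowhere_dense_in GG_space N)"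
  then have "\<forall>N\<in>Fam. nowhere_dense_in GG_space N" by blast
  moreover have "orb [] x \<subseteq> topspace GG_space" using orb_sub[OF x] topspace_GG by simp
  ultimately have "meager_in GG_space (orb [] x)" unfolding meager_in_def using c cov by blast
  then show False using nm by contradiction
qed

lemma KeyF:
  assumes x: "x \<in> GG" and nm: "\<not> meager_in GG_space (orb [] x)" and h: "h \<in> perm_set p"
  shows "LD (orb p x) (act h x)"
proof -
  define qm where "qm k = map (\<lambda>(a,b). (a, k a)) p" for k :: "nat \<Rightarrow> nat"
  define Fam where "Fam = (\<lambda>k. orb (qm k) x) ` Sperm"
  have "Fam \<subseteq> range (\<lambda>q. orb q x)" unfolding Fam_def by blast
  moreover have "countable (range (\<lambda>q. orb q x))" by (rule countable_image) (rule countableI_type)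
  ultimately have cF: "countable Fam" by (rule countable_subset)
  have qm_mem: "g \<in> perm_set (qm g)" if "g \<in> Sperm" for g
    using that unfolding perm_set_def qm_def by auto
  have cov: "orb [] x \<subseteq> \<Union>Fam"
  proof
    fix w assume "w \<in> orb [] x"
    then obtain g where g: "g \<in> Sperm" "w = act g x" unfolding orb_def perm_set_nil by blast
    then have "w \<in> orb (qm g) x" unfolding orb_def using qm_mem by blast
    then show "w \<in> \<Union>Fam" unfolding Fam_def using g(1) by blast
  qed
  obtain N where "N \<in> Fam" "\<not> nowhere_dense_in GG_space N" using notmeager_nd[OF x nm cF cov] by blast
  then obtain k where k: "k \<in> Sperm" "\<not> nowhere_dense_in GG_space (orb (qm k) x)"
    unfolding Fam_def by blast
  then obtain z0 where z0: "z0 \<in> GG" "LD (orb (qm k) x) z0"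
    using nowhere_dense_LD orb_sub[OF x] by blast
  obtain F where F: "finite F" "\<And>B F'. B \<in> Cyl F z0 \<Longrightarrow> finite F' \<Longrightarrow> \<exists>z. z \<in> Cyl F' B \<and> z \<in> orb (qm k) x"
    using z0(2) by (rule LD_E) blast
  obtain z where z: "z \<in> Cyl F z0" "z \<in> orb (qm k) x" using F(2)[OF Cyl_self[OF z0(1)] F(1)] by blast
  obtain k' where k': "k' \<in> perm_set (qm k)" "z = act k' x" using z(2) unfolding orb_def by blast
  have k'S: "k' \<in> Sperm" using k' perm_set_Sperm by blast
  have hS: "h \<in> Sperm" using h perm_set_Sperm by blast
  have zG: "z \<in> GG" using z(1) Cyl_sub by blast
  have LDz: "LD (orb (qm k) x) z"
    using F(2) Cyl_eq[OF z(1)] by (intro LD_I[OF F(1)]) simp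
  define \<pi> where "\<pi> = h \<circ> ginv k'"
  have \<pi>S: "\<pi> \<in> Sperm" unfolding \<pi>_def using Sperm_comp[OF hS Sperm_inv[OF k'S]] .
  have 1: "LD (act \<pi> ` orb (qm k) x) (act \<pi> z)" by (rule LD_act[OF \<pi>S zG LDz])
  have "\<pi> \<circ> k' = h" unfolding \<pi>_def using k'S by (simp add: fun_eq_iff)
  then have 2: "act \<pi> z = act h x" using act_comp[OF \<pi>S k'S, of x] k'(2) by simp
  have 3: "act \<pi> ` orb (qm k) x \<subseteq> orb p x"
  proof
    fix w assume "w \<in> act \<pi> ` orb (qm k) x"
    then obtain g where g: "g \<in> perm_set (qm k)" "w = act \<pi> (act g x)" unfolding orb_def by blast
    have gS: "g \<in> Sperm" using g perm_set_Sperm by blast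
    have "\<pi> \<circ> g \<in> perm_set p"
      unfolding perm_set_def
    proof (intro CollectI conjI ballI)
      show "\<pi> \<circ> g \<in> Sperm" using Sperm_comp[OF \<pi>S gS] .
      fix ab assume ab: "ab \<in> set p"
      obtain a b where ab': "ab = (a,b)" by (cases ab)
      have "(a, k a) \<in> set (qm k)" using ab ab' unfolding qm_def by force
      then have "g a = k a" "k' a = k a" using g(1) k'(1) unfolding perm_set_def by auto
      moreover have "h a = b" using h ab ab' unfolding perm_set_def by auto
      ultimately have "(\<pi> \<circ> g) a = b" unfolding \<pi>_def using k'S
        by (metis Sperm_inv_f comp_apply)
      then show "case ab of (a, b) \<Rightarrow> (\<pi> \<circ> g) a = b" using ab' by simp
    qed
    moreover have "w = act (\<pi> \<circ> g) x" using g(2) act_comp[OF \<pi>S gS] by simp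
    ultimately show "w \<in> orb p x" unfolding orb_def by blast
  qed
  show ?thesis using LD_mono[OF 1 3] 2 by simp
qed

definition extl :: "(nat \<times> nat) list \<Rightarrow> nat \<Rightarrow> bool \<Rightarrow> (nat \<times> nat) list set" where
  "extl p k d = (if d then {(k,v)#p | v. True} else {(u,k)#p | u. True})"

definition Nset :: "(nat \<times> nat \<Rightarrow> nat) \<Rightarrow> (nat \<times> nat) list \<Rightarrow> nat \<Rightarrow> bool \<Rightarrow> (nat \<times> nat \<Rightarrow> nat) set" where
  "Nset x p k d = {y \<in> GG. LD (orb p x) y \<and> \<not> (\<exists>p'\<in>extl p k d. LD (orb p' x) y)}"

lemma Nset_nd:
  assumes x: "x \<in> GG" and nm: "\<not> meager_in GG_space (orb [] x)"
  shows "nowhere_dense_in GG_space (Nset x p k d)"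
  unfolding nowhere_dense_LD
proof (intro conjI ballI notI)
  show "Nset x p k d \<subseteq> GG" unfolding Nset_def by blast
  fix y assume y: "y \<in> GG" and LDN: "LD (Nset x p k d) y"
  obtain F where F: "finite F" "\<And>B F'. B \<in> Cyl F y \<Longrightarrow> finite F' \<Longrightarrow> \<exists>z. z \<in> Cyl F' B \<and> z \<in> Nset x p k d"
    using LDN by (rule LD_E) blast
  obtain y1 where y1: "y1 \<in> Cyl F y" "y1 \<in> Nset x p k d" using F(2)[OF Cyl_self[OF y] F(1)] by blast
  have y1G: "y1 \<in> GG" and LD1: "LD (orb p x) y1" using y1(2) unfolding Nset_def by blast+
  obtain G where G: "finite G" "\<And>B F'. B \<in> Cyl G y1 \<Longrightarrow> finite F' \<Longrightarrow> \<exists>z. z \<in> Cyl F' B \<and> z \<in> orb p x"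
    using LD1 by (rule LD_E) blast
  have "finite (F \<union> G)" using F(1) G(1) by simp
  then obtain y2 where y2: "y2 \<in> Cyl (F \<union> G) y1" "y2 \<in> orb p x" using G(2)[OF Cyl_self[OF y1G]] by blast
  obtain h where h: "h \<in> perm_set p" "y2 = act h x" using y2(2) unfolding orb_def by blast
  have hS: "h \<in> Sperm" using h perm_set_Sperm by blast
  define p' where "p' = (if d then (k, h k)#p else (ginv h k, k)#p)"
  have p'ext: "p' \<in> extl p k d" unfolding p'_def extl_def by auto
  have "h \<in> perm_set p'" using h(1) hS unfolding p'_def perm_set_def by auto
  then have LD2: "LD (orb p' x) y2" using KeyF[OF x nm] h(2) by simp
  obtain G' where G': "finite G'" "\<And>B F'. B \<in> Cyl G' y2 \<Longrightarrow> finite F' \<Longrightarrow> \<exists>z. z \<in> Cyl F' B \<and> z \<in> orb p' x"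
    using LD2 by (rule LD_E) blast
  have "y2 \<in> Cyl F y1" using y2(1) Cyl_mono[of F "F \<union> G"] by blast
  then have "y2 \<in> Cyl F y" using Cyl_eq[OF y1(1)] by simp
  then obtain y3 where y3: "y3 \<in> Cyl G' y2" "y3 \<in> Nset x p k d" using F(2) G'(1) by blast
  have "LD (orb p' x) y3"
    using G'(2) Cyl_eq[OF y3(1)] by (intro LD_I[OF G'(1)]) simp
  then show False using y3(2) p'ext unfolding Nset_def by blast
qed

definition N0 :: "(nat \<times> nat \<Rightarrow> nat) \<Rightarrow> (nat \<times> nat \<Rightarrow> nat) set" where
  "N0 x = {y \<in> GG. \<not> LD (orb [] x) y}"

lemma N0_nd:
  assumes x: "x \<in> GG" and nm: "\<not> meager_in GG_space (orb [] x)"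
  shows "nowhere_dense_in GG_space (N0 x)"
  unfolding nowhere_dense_LD
proof (intro conjI ballI notI)
  show "N0 x \<subseteq> GG" unfolding N0_def by blast
  have "\<exists>N\<in>{orb [] x}. \<not> nowhere_dense_in GG_space N"
    by (rule notmeager_nd[OF x nm]) auto
  then obtain z0 where z0: "z0 \<in> GG" "LD (orb [] x) z0"
    using nowhere_dense_LD orb_sub[OF x] by blast
  fix y assume y: "y \<in> GG" and LDN: "LD (N0 x) y"
  obtain F where F: "finite F" "\<And>B F'. B \<in> Cyl F y \<Longrightarrow> finite F' \<Longrightarrow> \<exists>z. z \<in> Cyl F' B \<and> z \<in> N0 x"
    using LDN by (rule LD_E) blast
  obtain G where G: "finite G" "\<And>B F'. B \<in> Cyl G z0 \<Longrightarrow> finite F' \<Longrightarrow> \<exists>z. z \<in> Cyl F' B \<and> z \<in> orb [] x"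
    using z0(2) by (rule LD_E) blast
  obtain \<pi> B1 where \<pi>: "\<pi> \<in> Sperm" "B1 \<in> Cyl G z0" "act \<pi> B1 \<in> Cyl F y"
    using Trans[OF z0(1) y G(1) F(1)] by blast
  have B1G: "B1 \<in> GG" using \<pi>(2) Cyl_sub by blast
  have "LD (orb [] x) B1" using G(2) Cyl_eq[OF \<pi>(2)] by (intro LD_I[OF G(1)]) simp
  then have "LD (act \<pi> ` orb [] x) (act \<pi> B1)" by (rule LD_act[OF \<pi>(1) B1G])
  then have LD3: "LD (orb [] x) (act \<pi> B1)" using act_orb_nil[OF \<pi>(1)] by (rule LD_mono)
  obtain G' where G': "finite G'" "\<And>B F'. B \<in> Cyl G' (act \<pi> B1) \<Longrightarrow> finite F' \<Longrightarrow> \<exists>z. z \<in> Cyl F' B \<and> z \<in> orb [] x"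
    using LD3 by (rule LD_E) blast
  obtain y3 where y3: "y3 \<in> Cyl G' (act \<pi> B1)" "y3 \<in> N0 x" using F(2)[OF \<pi>(3) G'(1)] by blast
  have "LD (orb [] x) y3" using G'(2) Cyl_eq[OF y3(1)] by (intro LD_I[OF G'(1)]) simp
  then show False using y3(2) unfolding N0_def by blast
qed


lemma chain_contra:
  assumes x: "x \<in> GG" and y: "y \<in> GG" and yn: "y \<notin> orb [] x"
    and LD0: "LD (orb [] x) y"
    and step: "\<And>p k d. LD (orb p x) y \<Longrightarrow> \<exists>p'\<in>extl p k d. LD (orb p' x) y"
  shows False
proof -
  define nx where "nx p n = (let p1 = (SOME p1. p1 \<in> extl p n True \<and> LD (orb p1 x) y)
      in SOME p2. p2 \<in> extl p1 n False \<and> LD (orb p2 x) y)" for p n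
  have nx: "LD (orb (nx p n) x) y \<and> set p \<subseteq> set (nx p n) \<and> (\<exists>v. (n,v) \<in> set (nx p n))
      \<and> (\<exists>u. (u,n) \<in> set (nx p n))" if LDp: "LD (orb p x) y" for p n
  proof -
    define p1 where "p1 = (SOME p1. p1 \<in> extl p n True \<and> LD (orb p1 x) y)"
    have "\<exists>p1. p1 \<in> extl p n True \<and> LD (orb p1 x) y" using step[OF LDp, of n True] by blast
    then have P1: "p1 \<in> extl p n True \<and> LD (orb p1 x) y" unfolding p1_def by (rule someI_ex)
    define p2 where "p2 = (SOME p2. p2 \<in> extl p1 n False \<and> LD (orb p2 x) y)"
    have "\<exists>p2. p2 \<in> extl p1 n False \<and> LD (orb p2 x) y" using step[of p1 n False] P1 by blast
    then have P2: "p2 \<in> extl p1 n False \<and> LD (orb p2 x) y" unfolding p2_def by (rule someI_ex)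
    have eq: "nx p n = p2" unfolding nx_def p1_def p2_def Let_def by simp
    obtain v where v: "p1 = (n,v)#p" using P1 unfolding extl_def by auto
    obtain u where u: "p2 = (u,n)#p1" using P2 unfolding extl_def by auto
    show ?thesis unfolding eq using P2 u v by auto
  qed
  define ch where "ch = rec_nat [] (\<lambda>n p. nx p n)"
  have ch0: "ch 0 = []" and chS: "ch (Suc n) = nx (ch n) n" for n by (simp_all add: ch_def)
  have chLD: "LD (orb (ch n) x) y" for n
  proof (induction n)
    case 0 then show ?case using LD0 ch0 by simp
  next
    case (Suc n) then show ?case using nx[OF Suc] chS by simp
  qed
  have chmono: "set (ch m) \<subseteq> set (ch n)" if "m \<le> n" for m n
  proof -
    have "\<And>n. set (ch n) \<subseteq> set (ch (Suc n))" using nx[OF chLD] chS by simp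
    then show ?thesis using lift_Suc_mono_le[of "\<lambda>n. set (ch n)"] that by blast
  qed
  have chfwd: "\<exists>v. (n,v) \<in> set (ch (Suc n))" for n using nx[OF chLD] chS by simp
  have chbck: "\<exists>u. (u,n) \<in> set (ch (Suc n))" for n using nx[OF chLD] chS by simp
  have cons: "\<exists>h. h \<in> perm_set (ch n)" for n
  proof -
    have "orb (ch n) x \<noteq> {}" using LD_nonempty[OF chLD y] .
    then show ?thesis unfolding orb_def by blast
  qed
  have common: "\<exists>h\<in>perm_set (ch (max n m)). h a = b \<and> h a' = b'"
    if "(a,b) \<in> set (ch n)" "(a',b') \<in> set (ch m)" for a b a' b' n m
  proof -
    obtain h where h: "h \<in> perm_set (ch (max n m))" using cons by blast
    have "(a,b) \<in> set (ch (max n m))" "(a',b') \<in> set (ch (max n m))"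
      using that chmono[of n "max n m"] chmono[of m "max n m"] by auto
    then show ?thesis using h unfolding perm_set_def by auto
  qed
  define g where "g a = (SOME b. \<exists>n. (a,b) \<in> set (ch n))" for a
  have gex: "\<exists>n. (a, g a) \<in> set (ch n)" for a
  proof -
    have "\<exists>b n. (a,b) \<in> set (ch n)" using chfwd[of a] by blast
    then show ?thesis unfolding g_def by (rule someI_ex)
  qed
  have gval: "g a = b" if ab: "(a,b) \<in> set (ch n)" for a b n
  proof -
    obtain m where m: "(a, g a) \<in> set (ch m)" using gex by blast
    obtain h where "h a = b \<and> h a = g a" using common[OF ab m] by blast
    then show ?thesis by simp
  qed
  have ginj: "inj g"
  proof (rule injI)
    fix a a' assume eq: "g a = g a'"
    obtain n m where "(a, g a) \<in> set (ch n)" "(a', g a') \<in> set (ch m)" using gex by blast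
    then obtain h where h: "h \<in> perm_set (ch (max n m))" "h a = g a \<and> h a' = g a'" using common by blast
    have "h \<in> Sperm" using h(1) perm_set_Sperm by blast
    then have "h a = h a'" using h(2) eq by simp
    then show "a = a'" using \<open>h \<in> Sperm\<close> by simp
  qed
  have gsurj: "surj g"
  proof -
    have "b \<in> range g" for b
    proof -
      obtain u where "(u,b) \<in> set (ch (Suc b))" using chbck by blast
      then have "g u = b" by (rule gval)
      then show ?thesis by blast
    qed
    then show ?thesis by blast
  qed
  have gfix: "g c = c" if "c = 0 \<or> c = 1" for c
  proof -
    obtain n where n: "(c, g c) \<in> set (ch n)" using gex by blast
    obtain h where h: "h \<in> perm_set (ch n)" using cons by blast
    have hS: "h \<in> Sperm" using h perm_set_Sperm by blast
    have "h c = g c" using h n unfolding perm_set_def by auto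
    moreover have "h c = c" using that Sperm_0[OF hS] Sperm_1[OF hS] by auto
    ultimately show ?thesis by simp
  qed
  have gS: "g \<in> Sperm" unfolding Sperm_def using ginj gsurj gfix by (simp add: bij_def)
  have "act g x = y"
  proof (rule table_eqI[OF act_top[OF GG_top[OF x] gS] GG_top[OF y]])
    fix i j assume ij: "i \<in> Npos" "j \<in> Npos"
    define a c where "a = ginv g i" "c = ginv g j"
    then have ac: "a \<in> Npos" "c \<in> Npos" "i = g a" "j = g c" using ij gS by auto
    define e where "e = x (a,c)"
    obtain n1 n2 n3 where "(a, g a) \<in> set (ch n1)" "(c, g c) \<in> set (ch n2)" "(e, g e) \<in> set (ch n3)"
      using gex by metis
    then have mem: "(a, g a) \<in> set (ch (max n1 (max n2 n3)))" "(c, g c) \<in> set (ch (max n1 (max n2 n3)))"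
       "(e, g e) \<in> set (ch (max n1 (max n2 n3)))"
    proof -
      have "n1 \<le> max n1 (max n2 n3)" "n2 \<le> max n1 (max n2 n3)" "n3 \<le> max n1 (max n2 n3)" by simp_all
      then show "(a, g a) \<in> set (ch (max n1 (max n2 n3)))" "(c, g c) \<in> set (ch (max n1 (max n2 n3)))"
       "(e, g e) \<in> set (ch (max n1 (max n2 n3)))"
        using chmono \<open>(a, g a) \<in> set (ch n1)\<close> \<open>(c, g c) \<in> set (ch n2)\<close> \<open>(e, g e) \<in> set (ch n3)\<close>
        by blast+
    qed
    have "y (g a, g c) = g e" by (rule LD_entry[OF chLD y mem ac(1,2)]) (simp add: e_def)
    moreover have "act g x (g a, g c) = g e" using act_app[OF gS ac(1,2)] e_def by simp
    ultimately show "act g x (i,j) = y (i,j)" using ac by simp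
  qed
  then have "y \<in> orb [] x" using orb_nil_act[OF gS, of x] by simp
  then show False using yn by contradiction
qed

lemma main01:
  assumes x: "x \<in> GG" and nm: "\<not> meager_in GG_space (orb [] x)"
  shows "comeager_in GG_space (orb [] x)"
  unfolding comeager_in_def
proof
  show "orb [] x \<subseteq> topspace GG_space" using orb_sub[OF x] topspace_GG by simp
  define Fam where "Fam = insert (N0 x) ((\<lambda>(p,k,d). Nset x p k d) ` UNIV)"
  have cF: "countable Fam" unfolding Fam_def
    by (intro countable_insert countable_image) (rule countableI_type)
  have nd: "\<forall>N\<in>Fam. nowhere_dense_in GG_space N"
    unfolding Fam_def using N0_nd[OF x nm] Nset_nd[OF x nm] by auto
  have cov: "topspace GG_space - orb [] x \<subseteq> \<Union>Fam"
  proof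
    fix y assume "y \<in> topspace GG_space - orb [] x"
    then have y: "y \<in> GG" "y \<notin> orb [] x" using topspace_GG by auto
    show "y \<in> \<Union>Fam"
    proof (rule ccontr)
      assume nin: "y \<notin> \<Union>Fam"
      then have "y \<notin> N0 x" unfolding Fam_def by blast
      then have LD0: "LD (orb [] x) y" using y unfolding N0_def by blast
      have step: "\<exists>p'\<in>extl p k d. LD (orb p' x) y" if "LD (orb p x) y" for p k d
      proof -
        have "y \<notin> Nset x p k d" using nin unfolding Fam_def by blast
        then show ?thesis using that y(1) unfolding Nset_def by blast
      qed
      show False by (rule chain_contra[OF x y(1) y(2) LD0 step])
    qed
  qed
  show "meager_in GG_space (topspace GG_space - orb [] x)"
    unfolding meager_in_def using cF nd cov by blast
qed


theorem theorem5p6: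
  fixes H :: "('a, 'b) monoid_scheme"
  assumes "group H"
  shows "meager_in GG_space {A \<in> GG. group_of_table A \<cong> H} \<or>
         comeager_in GG_space {A \<in> GG. group_of_table A \<cong> H}"
proof (cases "{A \<in> GG. group_of_table A \<cong> H} = {}")
  case True
  have "meager_in GG_space {}" unfolding meager_in_def by (intro conjI exI[of _ "{}"]) auto
  then have "meager_in GG_space {A \<in> GG. group_of_table A \<cong> H}" unfolding True .
  then show ?thesis by (rule disjI1)
next
  case False
  then obtain x where x: "x \<in> GG" "group_of_table x \<cong> H" by blast
  have eq: "{A \<in> GG. group_of_table A \<cong> H} = orb [] x"
  proof
    show "{A \<in> GG. group_of_table A \<cong> H} \<subseteq> orb [] x"
    proof
      fix A assume "A \<in> {A \<in> GG. group_of_table A \<cong> H}"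
      then have A: "A \<in> GG" "group_of_table A \<cong> H" by auto
      have "H \<cong> group_of_table A" using group.iso_sym[OF GG_group[OF A(1)] A(2)] .
      then have "group_of_table x \<cong> group_of_table A" by (rule iso_trans[OF x(2)])
      then obtain g where "g \<in> Sperm" "A = act g x" using iso_act[OF x(1) A(1)] by blast
      then show "A \<in> orb [] x" using orb_nil_act by simp
    qed
    show "orb [] x \<subseteq> {A \<in> GG. group_of_table A \<cong> H}"
    proof
      fix A assume "A \<in> orb [] x"
      then obtain g where g: "g \<in> Sperm" "A = act g x" unfolding orb_def perm_set_nil by blast
      have AG: "A \<in> GG" using act_GG[OF x(1) g(1)] g(2) by simp
      have "group_of_table x \<cong> group_of_table A" using act_is_iso[OF x(1) g(1)] g(2) by simp
      then have "group_of_table A \<cong> group_of_table x" using group.iso_sym[OF GG_group[OF x(1)]] by blast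
      then have "group_of_table A \<cong> H" using x(2) by (rule iso_trans)
      then show "A \<in> {A \<in> GG. group_of_table A \<cong> H}" using AG by simp
    qed
  qed
  show ?thesis
  proof (cases "meager_in GG_space (orb [] x)")
    case True then show ?thesis using eq by simp
  next
    case False then show ?thesis using main01[OF x(1) False] eq by simp
  qed
qed


end
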